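(* Fix $\tau\in(0,1)$ and consider the moment function ($m=1$) $\rho(y,\mu,q)=\big((1-\tau)^{-1}y\,\mathbb I[y\ge q]-\mu,\ \tau-\mathbb I[y\le q]\big)$, so that $\nu_a^*(x)=(\mu_a^*(x;\tau),q_a^*(x;\tau))$ consists of the conditional super-quantile and the conditional $\tau$-quantile of $Y\mid X=x,A=a$, and the CDTE is $\mathrm{CSQTE}(x;\tau)=\mu_1^*(x;\tau)-\mu_0^*(x;\tau)$. Assume the conditional distributions of $Y$ given $X=x,A=a$ are continuous. Then the general pseudo-outcome (defined in the context) specializes to $$\psi^{\mathrm{CSQTE}}(Z,e,\mu,q)=\mu_1(X;\tau)-\mu_0(X;\tau)+\frac{A-e(X)}{e(X)(1-e(X))}\Big(q_A(X;\tau)+\frac{1}{1-\tau}(Y-q_A(X;\tau))\mathbb I[Y\ge q_A(X;\tau)]-\mu_A(X;\tau)\Big).$$ Furthermore, if the Boundedness Assumption (in the context) holds and the cross-fitted nuisance estimates $(\hat e^{(k)},\hat\mu^{(k)},\hat q^{(k)})$ lie in $\Xi$, then $$\mathcal E\lesssim\sum_{k=1}^K\sum_{a=0}^1\Big(\|\hat\mu_a^{(k)}-\mu_a^*\|\,\|\hat e^{(k)}-e^*\|+\|\hat q_a^{(k)}-q_a^*\|^2\Big).$$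
   Context: $Z=(X,A,Y)$ with $X\in\mathcal X$, $A\in\{0,1\}$, $Y\in\mathbb R$, $e^*(x)=P(A=1\mid X=x)$; $\|g\|=\mathbb E[g^2]^{1/2}$. $D$ denotes directional derivatives. The super-quantile at level $\tau$ of a distribution $F$ is $\inf_\beta \mathbb E_F[\beta+(1-\tau)^{-1}\max\{Y-\beta,0\}]$. General setting: for a moment function $\rho:\mathbb R\times\mathbb R^{m+1}\to\mathbb R^{m+1}$, $\rho(y,\nu)$ with $\nu=(\kappa,h)$, $\nu_a^*(x)=(\kappa_a^*(x),h_a^*(x))$ solves $\mathbb E[\rho(Y,\nu)\mid X=x,A=a]=0$; $J_a^*(x)=D_\nu\{\mathbb E[\rho(Y,\nu)\mid X=x,A=a]\}|_{\nu=\nu_a^*(x)}$ (assumed invertible) and $\alpha_a^*(x)$ is the first row of $J_a^*(x)^{-1}$. The pseudo-outcome for stand-ins $(e,\alpha,\nu)$ is $\psi(Z,e,\alpha,\nu)=\kappa_1(X)-\kappa_0(X)-\frac{A-e(X)}{e(X)(1-e(X))}\alpha_A(X)^T\rho(Y,\nu_A(X))$. Cross-fitting: given $n$ i.i.d. copies of $Z$, $K\ge2$ folds $I_k=\{i:i\equiv k-1\pmod K\}$, nuisance estimates $(\hat e^{(k)},\hat\alpha^{(k)},\hat\nu^{(k)})$ built from data outside $I_k$. $\mathcal E=\sum_{k=1}^K\mathcal E(\hat e^{(k)},\hat\alpha^{(k)},\hat\nu^{(k)})$, where $\mathcal E(e,\alpha,\nu)=\sum_{a=0}^1\big(\|\kappa_a-\kappa_a^*\|\|e-e^*\|+\sum_{i,j}G_{ij}\|\alpha_{a,i}-\alpha^*_{a,i}\|\|\nu_{a,j}-\nu^*_{a,j}\|+\sum_{i,j}H_{ij}\|\nu_{a,i}-\nu^*_{a,i}\|\|\nu_{a,j}-\nu^*_{a,j}\|\big)$.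 Boundedness Assumption: for a set $\Xi$ of nuisance realizations, there exist $c_1>0,c_2\ge0,c_3\ge0,c_4>0,c_5\ge0$ and $G,H\in\{0,1\}^{(m+1)\times(m+1)}$ such that for all $(e,\alpha,\nu)\in\Xi$, $a$, $i,j,l$, and $\bar\nu_a$ in the convex hull of $\{\nu_a^*,\nu_a\}$: $e^*(X),e(X)\in[c_1,1-c_1]$; $|D_{\nu_{a,j}}\mathbb E[\rho_i(Y,\nu_a)\mid X,A=a]|_{\nu_a=\bar\nu_a}|\le c_2G_{ij}$; $|D_{\nu_{a,l}}D_{\nu_{a,j}}\mathbb E[\rho_i(Y,\nu_a)\mid X=x,A=a]|_{\nu_a=\bar\nu_a}|\le c_3H_{jl}$; $\det(D_{\nu_a}\{\mathbb E[\rho(Y,\nu_a)\mid X=x,A=a]\}|_{\nu_a=\bar\nu_a})>c_4$; $|\rho_i(Y,\bar\nu_a)|\le c_5$. *)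

theory Defs
  imports "HOL-Probability.Probability"
begin

section \<open>Vectors in R^2 (m = 1): component 1 = kappa (= mu), component 2 = h (= q)\<close>

definition mk2 :: "real \<Rightarrow> real \<Rightarrow> real^2" where
  "mk2 u v = (\<chi> i. if i = 1 then u else v)"

definition rho_sq :: "real \<Rightarrow> real \<Rightarrow> real^2 \<Rightarrow> real^2" where
  "rho_sq tau y nu =
     mk2 (y * (if y \<ge> nu$2 then 1 else 0) / (1 - tau) - nu$1)
         (tau - (if y \<le> nu$2 then 1 else 0))"

text \<open>Conditional moment  E[rho(Y,nu) | X = x, A = a], where Kc a x is the conditional
  law of Y given X = x, A = a.\<close>
definition cmom :: "real \<Rightarrow> (nat \<Rightarrow> 'x \<Rightarrow> real measure) \<Rightarrow> nat \<Rightarrow> 'x \<Rightarrow> real^2 \<Rightarrow> real^2" where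
  "cmom tau Kc a x nu = (\<chi> i. \<integral>y. rho_sq tau y nu $ i \<partial>(Kc a x))"

definition pdir :: "(real^2 \<Rightarrow> real^2) \<Rightarrow> 2 \<Rightarrow> 2 \<Rightarrow> real^2 \<Rightarrow> real" where
  "pdir f i j nu = deriv (\<lambda>t. f (nu + t *\<^sub>R axis j 1) $ i) 0"

definition jac :: "real \<Rightarrow> (nat \<Rightarrow> 'x \<Rightarrow> real measure) \<Rightarrow> nat \<Rightarrow> 'x \<Rightarrow> real^2 \<Rightarrow> real^2^2" where
  "jac tau Kc a x nu = (\<chi> i j. pdir (cmom tau Kc a x) i j nu)"

definition alpha_star :: "real \<Rightarrow> (nat \<Rightarrow> 'x \<Rightarrow> real measure) \<Rightarrow> (nat \<Rightarrow> 'x \<Rightarrow> real^2) \<Rightarrow> nat \<Rightarrow> 'x \<Rightarrow> real^2" where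
  "alpha_star tau Kc nus a x = matrix_inv (jac tau Kc a x (nus a x)) $ 1"

definition psi_gen :: "real \<Rightarrow> 'x \<times> nat \<times> real \<Rightarrow> ('x \<Rightarrow> real) \<Rightarrow> (nat \<Rightarrow> 'x \<Rightarrow> real^2)
                       \<Rightarrow> (nat \<Rightarrow> 'x \<Rightarrow> real^2) \<Rightarrow> real" where
  "psi_gen tau z e al nu = (case z of (x, a, y) \<Rightarrow>
      nu 1 x $ 1 - nu 0 x $ 1
      - (real a - e x) / (e x * (1 - e x)) * (al a x \<bullet> rho_sq tau y (nu a x)))"

definition psi_csqte :: "real \<Rightarrow> 'x \<times> nat \<times> real \<Rightarrow> ('x \<Rightarrow> real) \<Rightarrow> (nat \<Rightarrow> 'x \<Rightarrow> real)
                       \<Rightarrow> (nat \<Rightarrow> 'x \<Rightarrow> real) \<Rightarrow> real" where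
  "psi_csqte tau z e mu q = (case z of (x, a, y) \<Rightarrow>
      mu 1 x - mu 0 x
      + (real a - e x) / (e x * (1 - e x)) *
        (q a x + (y - q a x) * (if y \<ge> q a x then 1 else 0) / (1 - tau) - mu a x))"

text \<open>Nuisances (mu,q) as nu = (kappa,h), and the alpha implied by q (the form of alpha*).\<close>
definition nu_of :: "(nat \<Rightarrow> 'x \<Rightarrow> real) \<Rightarrow> (nat \<Rightarrow> 'x \<Rightarrow> real) \<Rightarrow> nat \<Rightarrow> 'x \<Rightarrow> real^2" where
  "nu_of mu q a x = mk2 (mu a x) (q a x)"

definition alpha_of :: "real \<Rightarrow> (nat \<Rightarrow> 'x \<Rightarrow> real) \<Rightarrow> nat \<Rightarrow> 'x \<Rightarrow> real^2" where
  "alpha_of tau q a x = mk2 (-1) (q a x / (1 - tau))"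

definition L2n :: "'x measure \<Rightarrow> ('x \<Rightarrow> real) \<Rightarrow> real" where
  "L2n PX g = sqrt (\<integral>x. (g x)^2 \<partial>PX)"

definition err_fun :: "'x measure \<Rightarrow> ('x \<Rightarrow> real) \<Rightarrow> (nat \<Rightarrow> 'x \<Rightarrow> real^2) \<Rightarrow> (nat \<Rightarrow> 'x \<Rightarrow> real^2)
    \<Rightarrow> real^2^2 \<Rightarrow> real^2^2
    \<Rightarrow> ('x \<Rightarrow> real) \<Rightarrow> (nat \<Rightarrow> 'x \<Rightarrow> real^2) \<Rightarrow> (nat \<Rightarrow> 'x \<Rightarrow> real^2) \<Rightarrow> real" where
  "err_fun PX es als nus G H e al nu =
     (\<Sum>a\<in>{0,1::nat}.
        L2n PX (\<lambda>x. nu a x $ 1 - nus a x $ 1) * L2n PX (\<lambda>x. e x - es x)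
      + (\<Sum>i\<in>UNIV. \<Sum>j\<in>UNIV. G $ i $ j * L2n PX (\<lambda>x. al a x $ i - als a x $ i)
                                        * L2n PX (\<lambda>x. nu a x $ j - nus a x $ j))
      + (\<Sum>i\<in>UNIV. \<Sum>j\<in>UNIV. H $ i $ j * L2n PX (\<lambda>x. nu a x $ i - nus a x $ i)
                                        * L2n PX (\<lambda>x. nu a x $ j - nus a x $ j)))"

definition boundedness ::
  "real \<Rightarrow> 'x measure \<Rightarrow> (nat \<Rightarrow> 'x \<Rightarrow> real measure) \<Rightarrow> ('x \<Rightarrow> real) \<Rightarrow> (nat \<Rightarrow> 'x \<Rightarrow> real^2)
   \<Rightarrow> (('x \<Rightarrow> real) \<times> (nat \<Rightarrow> 'x \<Rightarrow> real^2) \<times> (nat \<Rightarrow> 'x \<Rightarrow> real^2)) set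
   \<Rightarrow> real \<Rightarrow> real \<Rightarrow> real \<Rightarrow> real \<Rightarrow> real \<Rightarrow> real^2^2 \<Rightarrow> real^2^2 \<Rightarrow> bool" where
  "boundedness tau PX Kc es nus Xi c1 c2 c3 c4 c5 G H \<longleftrightarrow>
     c1 > 0 \<and> c2 \<ge> 0 \<and> c3 \<ge> 0 \<and> c4 > 0 \<and> c5 \<ge> 0 \<and>
     (\<forall>i j. G $ i $ j \<in> {0, 1}) \<and> (\<forall>i j. H $ i $ j \<in> {0, 1}) \<and>
     (\<forall>(e, al, nu) \<in> Xi. \<forall>a \<in> {0, 1}. AE x in PX.
        es x \<in> {c1 .. 1 - c1} \<and> e x \<in> {c1 .. 1 - c1} \<and>
        (\<forall>nub \<in> convex hull {nus a x, nu a x}.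
           (\<forall>i j. \<exists>d. ((\<lambda>t. cmom tau Kc a x (nub + t *\<^sub>R axis j 1) $ i) has_real_derivative d) (at 0)
                       \<and> \<bar>d\<bar> \<le> c2 * G $ i $ j) \<and>
           (\<forall>i j l. \<exists>d. ((\<lambda>t. pdir (cmom tau Kc a x) i j (nub + t *\<^sub>R axis l 1)) has_real_derivative d) (at 0)
                       \<and> \<bar>d\<bar> \<le> c3 * H $ j $ l) \<and>
           det (jac tau Kc a x nub) > c4 \<and>
           (\<forall>i. AE y in Kc a x. \<bar>rho_sq tau y nub $ i\<bar> \<le> c5)))"

text \<open>Sparsity patterns of the first and second derivatives of E[rho(Y,nu)|X,A] for the CSQTE
  moment function: rho_2 does not depend on mu, and rho is affine in mu.\<close>
definition G_sq :: "real^2^2" where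
  "G_sq = (\<chi> i j. if i = 2 \<and> j = 1 then 0 else 1)"

definition H_sq :: "real^2^2" where
  "H_sq = (\<chi> j l. if j = 2 \<and> l = 2 then 1 else 0)"

end

theory Submission
  imports Defs
begin

lemma matrix_inv_eqI:
  fixes A B :: "real^2^2"
  assumes "A ** B = mat 1" "B ** A = mat 1"
  shows "matrix_inv A = B"
proof -
  have ex: "\<exists>B'. A ** B' = mat 1 \<and> B' ** A = mat 1" using assms by blast
  define B' where "B' = matrix_inv A"
  have B': "A ** B' = mat 1 \<and> B' ** A = mat 1"
    unfolding B'_def matrix_inv_def by (rule someI_ex[OF ex])
  have "B' = B' ** (A ** B)" using assms by simp
  also have "\<dots> = (B' ** A) ** B" by (simp add: matrix_mul_assoc)
  also have "\<dots> = B" using B' by simp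
  finally show ?thesis unfolding B'_def .
qed

lemma inv2_row1:
  fixes A :: "real^2^2"
  assumes "A$1$1 = -1" "A$1$2 = d12" "A$2$1 = 0" "A$2$2 = d22" "d22 \<noteq> 0"
  shows "matrix_inv A $ 1 = mk2 (-1) (d12/d22)"
proof -
  define B :: "real^2^2" where "B = (\<chi> i j. if i = 1 then (if j = 1 then -1 else d12/d22)
                                    else (if j = 1 then 0 else 1/d22))"
  have AB: "A ** B = mat 1" "B ** A = mat 1"
    using assms unfolding B_def
    by (auto simp: matrix_matrix_mult_def vec_eq_iff forall_2 sum_2 mat_def field_simps)
  show ?thesis using matrix_inv_eqI[OF AB]
    by (simp add: B_def mk2_def vec_eq_iff forall_2)
qed

lemma key_ineq:
  fixes K :: "real measure" and tau q m c5 t :: real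
  assumes P: "prob_space K" and S: "sets K = sets borel"
    and atom: "\<forall>y. measure K {y} = 0" and tau: "0 < tau" "tau < 1"
    and bd: "AE y in K. \<bar>y * (if y \<ge> q then 1 else 0) / (1 - tau) - m\<bar> \<le> c5"
    and t: "0 < t"
  defines "Phi \<equiv> \<lambda>s. \<integral>y. (y * (if y \<ge> q + s then 1 else 0) / (1 - tau) - m) \<partial>K"
    and "F \<equiv> \<lambda>s. \<integral>y. (tau - (if y \<le> q + s then 1 else 0)) \<partial>K"
  shows "\<bar>(1 - tau) * (Phi t - Phi 0) - q * (F t - F 0)\<bar> \<le> t * \<bar>F t - F 0\<bar>"
proof -
  interpret prob_space K by (rule P)
  have meas: "f \<in> borel_measurable K" if "f \<in> borel_measurable borel" for f :: "real \<Rightarrow> real"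
    using that measurable_cong_sets[OF S refl] by blast
  have ae_ne: "AE y in K. y \<noteq> c" for c
  proof -
    have "{c} \<in> sets K" using S by simp
    then have "emeasure K {c} = 0" using atom emeasure_eq_measure by simp
    then show ?thesis by (intro AE_I[where N="{c}"]) (auto simp: \<open>{c} \<in> sets K\<close>)
  qed
  define u where "u = (\<lambda>y::real. y * (if y \<ge> q then 1 else 0) / (1 - tau) - m)"
  define v where "v = (\<lambda>y::real. y * (if y \<ge> q + t then 1 else 0) / (1 - tau) - m)"
  define f0 where "f0 = (\<lambda>y::real. tau - (if y \<le> q then 1 else 0))"
  define f1 where "f1 = (\<lambda>y::real. tau - (if y \<le> q + t then 1 else 0))"
  have mu: "u \<in> borel_measurable K" unfolding u_def by (rule meas) measurable
  have mv: "v \<in> borel_measurable K" unfolding v_def by (rule meas) measurable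
  have mf0: "f0 \<in> borel_measurable K" unfolding f0_def by (rule meas) measurable
  have mf1: "f1 \<in> borel_measurable K" unfolding f1_def by (rule meas) measurable
  have iu: "integrable K u"
    by (rule integrable_const_bound[where B=c5]) (use bd mu in \<open>auto simp: u_def\<close>)
  have bdv: "\<bar>v y\<bar> \<le> \<bar>u y\<bar> + (\<bar>q\<bar> + t) / (1 - tau)" for y
  proof -
    have "\<bar>v y - u y\<bar> \<le> (\<bar>q\<bar> + t) / (1 - tau)"
      using tau t by (auto simp: u_def v_def divide_simps abs_if split: if_splits)
    then show ?thesis by linarith
  qed
  have iv: "integrable K v"
    by (rule integrable_const_bound[where B="c5 + (\<bar>q\<bar> + t) / (1 - tau)"])
       (use mv in \<open>simp_all\<close>, use bd in \<open>eventually_elim\<close>,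
        metis bdv add_le_cancel_right order_trans u_def real_norm_def)
  have if0: "integrable K f0"
    by (rule integrable_const_bound[where B="1 + \<bar>tau\<bar>"]) (use mf0 in \<open>auto simp: f0_def\<close>)
  have if1: "integrable K f1"
    by (rule integrable_const_bound[where B="1 + \<bar>tau\<bar>"]) (use mf1 in \<open>auto simp: f1_def\<close>)
  define g where "g = (\<lambda>y. (1 - tau) * (v y - u y) - q * (f1 y - f0 y))"
  define h where "h = (\<lambda>y. t * (f0 y - f1 y))"
  have ig: "integrable K g" unfolding g_def using iu iv if0 if1 by auto
  have ih: "integrable K h" unfolding h_def using if0 if1 by auto
  have Phi0: "Phi 0 = integral\<^sup>L K u" and Phit: "Phi t = integral\<^sup>L K v"
    and F0: "F 0 = integral\<^sup>L K f0" and Ft: "F t = integral\<^sup>L K f1"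
    by (simp_all add: Phi_def F_def u_def v_def f0_def f1_def)
  have eq1: "(1 - tau) * (Phi t - Phi 0) - q * (F t - F 0) = integral\<^sup>L K g"
    unfolding Phi0 Phit F0 Ft g_def using iu iv if0 if1 by simp
  have eq2: "integral\<^sup>L K h = t * (F 0 - F t)"
    unfolding F0 Ft h_def using if0 if1 by simp
  have ae: "AE y in K. \<bar>g y\<bar> \<le> h y"
    using ae_ne[of q] ae_ne[of "q + t"]
  proof eventually_elim
    case (elim y)
    have "(1 - tau) * (v y - u y) = y * (if y \<ge> q + t then 1 else 0) - y * (if y \<ge> q then 1 else 0)"
      using tau by (simp add: u_def v_def right_diff_distrib)
    then have gy: "g y = y * (if y \<ge> q + t then 1 else 0) - y * (if y \<ge> q then 1 else 0)
        - q * ((if y \<le> q then 1 else 0) - (if y \<le> q + t then 1 else 0))"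
      by (simp add: g_def f0_def f1_def)
    have hy: "h y = t * ((if y \<le> q + t then 1 else 0) - (if y \<le> q then 1 else 0))"
      by (simp add: h_def f0_def f1_def)
    show ?case unfolding gy hy using elim t
      by (cases "y \<le> q"; cases "y \<le> q + t") (auto simp: abs_if)
  qed
  have "\<bar>integral\<^sup>L K g\<bar> \<le> integral\<^sup>L K (\<lambda>y. \<bar>g y\<bar>)" by (rule integral_abs_bound)
  also have "\<dots> \<le> integral\<^sup>L K h"
    by (rule integral_mono_AE) (use ig ih ae in auto)
  also have "\<dots> \<le> t * \<bar>F t - F 0\<bar>" unfolding eq2 using t
    by (intro mult_left_mono) auto
  finally show ?thesis using eq1 by simp
qed

lemma deriv_rel:
  fixes Phi F :: "real \<Rightarrow> real" and tau q d12 d22 :: real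
  assumes ineq: "\<And>t. 0 < t \<Longrightarrow> \<bar>(1 - tau) * (Phi t - Phi 0) - q * (F t - F 0)\<bar> \<le> t * \<bar>F t - F 0\<bar>"
    and dP: "(Phi has_real_derivative d12) (at 0)"
    and dF: "(F has_real_derivative d22) (at 0)"
  shows "(1 - tau) * d12 = q * d22"
proof -
  have lP: "((\<lambda>s. (Phi s - Phi 0) / s) \<longlongrightarrow> d12) (at_right 0)"
  proof -
    have "((\<lambda>y. (Phi y - Phi 0) / (y - 0)) \<longlongrightarrow> d12) (at 0)"
      using dP unfolding has_field_derivative_iff .
    then have "((\<lambda>y. (Phi y - Phi 0) / y) \<longlongrightarrow> d12) (at 0)" by (simp only: diff_zero)
    then show ?thesis unfolding filterlim_at_split by (elim conjE)
  qed
  have lF: "((\<lambda>s. (F s - F 0) / s) \<longlongrightarrow> d22) (at_right 0)"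
  proof -
    have "((\<lambda>y. (F y - F 0) / (y - 0)) \<longlongrightarrow> d22) (at 0)"
      using dF unfolding has_field_derivative_iff .
    then have "((\<lambda>y. (F y - F 0) / y) \<longlongrightarrow> d22) (at 0)" by (simp only: diff_zero)
    then show ?thesis unfolding filterlim_at_split by (elim conjE)
  qed
  have cF: "(F \<longlongrightarrow> F 0) (at_right 0)"
  proof -
    have "(F \<longlongrightarrow> F 0) (at 0)" using DERIV_isCont[OF dF] unfolding isCont_def .
    then show ?thesis unfolding filterlim_at_split by (elim conjE)
  qed
  have l1: "((\<lambda>s. \<bar>(1 - tau) * ((Phi s - Phi 0) / s) - q * ((F s - F 0) / s)\<bar>)
      \<longlongrightarrow> \<bar>(1 - tau) * d12 - q * d22\<bar>) (at_right 0)"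
    by (intro tendsto_intros lP lF)
  have l2: "((\<lambda>s. \<bar>F s - F 0\<bar>) \<longlongrightarrow> \<bar>F 0 - F 0\<bar>) (at_right 0)"
    by (intro tendsto_intros cF)
  have ev: "eventually (\<lambda>s. \<bar>(1 - tau) * ((Phi s - Phi 0) / s) - q * ((F s - F 0) / s)\<bar>
       \<le> \<bar>F s - F 0\<bar>) (at_right 0)"
  proof (intro eventually_at_rightI[where b=1])
    fix s :: real assume s: "s \<in> {0<..<1}"
    then have "\<bar>(1 - tau) * ((Phi s - Phi 0) / s) - q * ((F s - F 0) / s)\<bar>
       = \<bar>(1 - tau) * (Phi s - Phi 0) - q * (F s - F 0)\<bar> / s"
    proof -
      have "(1 - tau) * ((Phi s - Phi 0) / s) - q * ((F s - F 0) / s)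
          = ((1 - tau) * (Phi s - Phi 0) - q * (F s - F 0)) / s"
        by (simp add: diff_divide_distrib right_diff_distrib times_divide_eq_right)
      then show ?thesis using s by simp
    qed
    also have "\<dots> \<le> s * \<bar>F s - F 0\<bar> / s" using s ineq[of s]
      by (intro divide_right_mono) simp_all
    also have "\<dots> = \<bar>F s - F 0\<bar>" using s by simp
    finally show "\<bar>(1 - tau) * ((Phi s - Phi 0) / s) - q * ((F s - F 0) / s)\<bar> \<le> \<bar>F s - F 0\<bar>" .
  qed simp
  have "\<bar>(1 - tau) * d12 - q * d22\<bar> \<le> \<bar>F 0 - F 0\<bar>"
    by (rule tendsto_le[OF _ l2 l1 ev]) simp
  then show ?thesis by simp
qed

lemma comp_simps:
  fixes n :: "real^2"
  shows "(n + t *\<^sub>R axis 1 1) $ 1 = n$1 + t" "(n + t *\<^sub>R axis 1 1) $ 2 = n$2"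
    "(n + t *\<^sub>R axis 2 1) $ 1 = n$1" "(n + t *\<^sub>R axis 2 1) $ 2 = n$2 + t"
  by (auto simp: axis_def)

lemma rho1: "rho_sq tau y nu $ 1 = y * (if y \<ge> nu$2 then 1 else 0) / (1 - tau) - nu$1"
  and rho2: "rho_sq tau y nu $ 2 = tau - (if y \<le> nu$2 then 1 else 0)"
  by (auto simp: rho_sq_def mk2_def)

lemma alpha_point:
  fixes Kc :: "nat \<Rightarrow> 'x \<Rightarrow> real measure" and n :: "real^2"
  assumes P: "prob_space (Kc a x)" and S: "sets (Kc a x) = sets borel"
    and atom: "\<forall>y. measure (Kc a x) {y} = 0" and tau: "0 < tau" "tau < 1"
    and D: "\<forall>i j. \<exists>d. ((\<lambda>t. cmom tau Kc a x (n + t *\<^sub>R axis j 1) $ i) has_real_derivative d) (at 0)"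
    and det: "det (jac tau Kc a x n) > c4" and c4: "c4 > 0"
    and B: "\<forall>i. AE y in Kc a x. \<bar>rho_sq tau y n $ i\<bar> \<le> c5"
  shows "matrix_inv (jac tau Kc a x n) $ 1 = mk2 (-1) (n$2 / (1 - tau))"
proof -
  interpret prob_space "Kc a x" by (rule P)
  define q where "q = n$2"
  define m where "m = n$1"
  have meas: "f \<in> borel_measurable (Kc a x)" if "f \<in> borel_measurable borel" for f :: "real \<Rightarrow> real"
    using that measurable_cong_sets[OF S refl] by blast
  have bd: "AE y in Kc a x. \<bar>y * (if y \<ge> q then 1 else 0) / (1 - tau) - m\<bar> \<le> c5"
    using B[rule_format, of 1] by (simp add: rho1 q_def m_def)
  define u where "u = (\<lambda>y::real. y * (if y \<ge> q then 1 else 0) / (1 - tau) - m)"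
  have iu: "integrable (Kc a x) u"
    by (rule integrable_const_bound[where B=c5]) (use bd in \<open>simp add: u_def\<close>, unfold u_def, rule meas, measurable)
  obtain d12 where d12: "((\<lambda>t. cmom tau Kc a x (n + t *\<^sub>R axis 2 1) $ 1) has_real_derivative d12) (at 0)"
    using D by blast
  obtain d22 where d22: "((\<lambda>t. cmom tau Kc a x (n + t *\<^sub>R axis 2 1) $ 2) has_real_derivative d22) (at 0)"
    using D by blast
  have j12: "jac tau Kc a x n $ 1 $ 2 = d12"
    using DERIV_imp_deriv[OF d12] by (simp add: jac_def pdir_def)
  have j22: "jac tau Kc a x n $ 2 $ 2 = d22"
    using DERIV_imp_deriv[OF d22] by (simp add: jac_def pdir_def)
  have j21: "jac tau Kc a x n $ 2 $ 1 = 0"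
    by (simp add: jac_def pdir_def cmom_def rho2 comp_simps axis_def)
  have e11: "cmom tau Kc a x (n + t *\<^sub>R axis 1 1) $ 1 = integral\<^sup>L (Kc a x) u - t" for t
  proof -
    have "cmom tau Kc a x (n + t *\<^sub>R axis 1 1) $ 1 = (\<integral>y. (u y - t) \<partial>(Kc a x))"
      by (simp add: cmom_def rho1 comp_simps axis_def u_def q_def m_def algebra_simps)
    also have "\<dots> = integral\<^sup>L (Kc a x) u - t" using iu by (simp add: prob_space)
    finally show ?thesis .
  qed
  have "((\<lambda>t. cmom tau Kc a x (n + t *\<^sub>R axis 1 1) $ 1) has_real_derivative -1) (at 0)"
    unfolding e11 by (auto intro!: derivative_eq_intros)
  then have j11: "jac tau Kc a x n $ 1 $ 1 = -1"
    using DERIV_imp_deriv by (simp add: jac_def pdir_def)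
  have "det (jac tau Kc a x n) = - d22"
    by (simp add: det_2 j11 j12 j21 j22)
  then have d22nz: "d22 \<noteq> 0" using det c4 by auto
  have rel: "(1 - tau) * d12 = q * d22"
  proof (rule deriv_rel)
    show "((\<lambda>s. \<integral>y. (y * (if y \<ge> q + s then 1 else 0) / (1 - tau) - m) \<partial>(Kc a x))
          has_real_derivative d12) (at 0)"
      using d12 by (simp add: cmom_def rho1 comp_simps axis_def q_def m_def)
    show "((\<lambda>s. \<integral>y. (tau - (if y \<le> q + s then 1 else 0)) \<partial>(Kc a x))
          has_real_derivative d22) (at 0)"
      using d22 by (simp add: cmom_def rho2 comp_simps axis_def q_def m_def)
    fix t :: real assume "0 < t"
    then show "\<bar>(1 - tau) * ((\<lambda>s. \<integral>y. (y * (if y \<ge> q + s then 1 else 0) / (1 - tau) - m) \<partial>(Kc a x)) t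
             - (\<lambda>s. \<integral>y. (y * (if y \<ge> q + s then 1 else 0) / (1 - tau) - m) \<partial>(Kc a x)) 0)
          - q * ((\<lambda>s. \<integral>y. (tau - (if y \<le> q + s then 1 else 0)) \<partial>(Kc a x)) t
             - (\<lambda>s. \<integral>y. (tau - (if y \<le> q + s then 1 else 0)) \<partial>(Kc a x)) 0)\<bar>
         \<le> t * \<bar>(\<lambda>s. \<integral>y. (tau - (if y \<le> q + s then 1 else 0)) \<partial>(Kc a x)) t
             - (\<lambda>s. \<integral>y. (tau - (if y \<le> q + s then 1 else 0)) \<partial>(Kc a x)) 0\<bar>"
      using key_ineq[OF P S atom tau bd \<open>0 < t\<close>] by (simp only:)
  qed
  have rat: "d12 / d22 = n$2 / (1 - tau)"
  proof -
    have "d12 * (1 - tau) = q * d22" using rel by (simp add: mult.commute)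
    then have "d12 = q * d22 / (1 - tau)" using tau by (simp add: eq_divide_eq)
    then show ?thesis using d22nz by (simp add: q_def)
  qed
  show ?thesis
    using inv2_row1[OF j11 j12 j21 j22 d22nz] unfolding rat .
qed

lemma bounded_point:
  assumes B: "boundedness tau PX Kc es nus Xi c1 c2 c3 c4 c5 G H"
    and mem: "(e, al, nu) \<in> Xi" and a: "a \<in> {0,1}"
  shows "AE x in PX. (\<forall>i j. \<exists>d. ((\<lambda>t. cmom tau Kc a x (nus a x + t *\<^sub>R axis j 1) $ i) has_real_derivative d) (at 0))
            \<and> det (jac tau Kc a x (nus a x)) > c4
            \<and> (\<forall>i. AE y in Kc a x. \<bar>rho_sq tau y (nus a x) $ i\<bar> \<le> c5)"
proof -
  note X = B[unfolded boundedness_def, THEN conjunct2, THEN conjunct2, THEN conjunct2, THEN conjunct2,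
             THEN conjunct2, THEN conjunct2, THEN conjunct2]
  note Y = bspec[OF X mem]
  have Z: "\<forall>a\<in>{0,1}. AE x in PX.
        es x \<in> {c1 .. 1 - c1} \<and> e x \<in> {c1 .. 1 - c1} \<and>
        (\<forall>nub \<in> convex hull {nus a x, nu a x}.
           (\<forall>i j. \<exists>d. ((\<lambda>t. cmom tau Kc a x (nub + t *\<^sub>R axis j 1) $ i) has_real_derivative d) (at 0)
                       \<and> \<bar>d\<bar> \<le> c2 * G $ i $ j) \<and>
           (\<forall>i j l. \<exists>d. ((\<lambda>t. pdir (cmom tau Kc a x) i j (nub + t *\<^sub>R axis l 1)) has_real_derivative d) (at 0)
                       \<and> \<bar>d\<bar> \<le> c3 * H $ j $ l) \<and>
           det (jac tau Kc a x nub) > c4 \<and>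
           (\<forall>i. AE y in Kc a x. \<bar>rho_sq tau y nub $ i\<bar> \<le> c5))"
    using Y by simp
  show ?thesis
    using bspec[OF Z a]
  proof (rule eventually_mono)
    fix x assume H: "es x \<in> {c1 .. 1 - c1} \<and> e x \<in> {c1 .. 1 - c1} \<and>
        (\<forall>nub \<in> convex hull {nus a x, nu a x}.
           (\<forall>i j. \<exists>d. ((\<lambda>t. cmom tau Kc a x (nub + t *\<^sub>R axis j 1) $ i) has_real_derivative d) (at 0)
                       \<and> \<bar>d\<bar> \<le> c2 * G $ i $ j) \<and>
           (\<forall>i j l. \<exists>d. ((\<lambda>t. pdir (cmom tau Kc a x) i j (nub + t *\<^sub>R axis l 1)) has_real_derivative d) (at 0)
                       \<and> \<bar>d\<bar> \<le> c3 * H $ j $ l) \<and>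
           det (jac tau Kc a x nub) > c4 \<and>
           (\<forall>i. AE y in Kc a x. \<bar>rho_sq tau y nub $ i\<bar> \<le> c5))"
    have "nus a x \<in> convex hull {nus a x, nu a x}" by (rule hull_inc) simp
    with H show "(\<forall>i j. \<exists>d. ((\<lambda>t. cmom tau Kc a x (nus a x + t *\<^sub>R axis j 1) $ i) has_real_derivative d) (at 0))
            \<and> det (jac tau Kc a x (nus a x)) > c4
            \<and> (\<forall>i. AE y in Kc a x. \<bar>rho_sq tau y (nus a x) $ i\<bar> \<le> c5)"
      by blast
  qed
qed

lemma L2_zero:
  assumes "AE x in M. f x = 0"
  shows "L2n M f = 0"
proof -
  have "AE x in M. (f x)^2 = 0" using assms by eventually_elim simp
  then have "integral\<^sup>L M (\<lambda>x. (f x)^2) = 0" by (rule integral_eq_zero_AE)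
  then show ?thesis by (simp add: L2n_def)
qed

lemma L2_nonneg: "L2n M f \<ge> 0"
  by (simp add: L2n_def)

lemma L2_bound:
  fixes f g :: "'x \<Rightarrow> real" and c :: real
  assumes c: "c > 0" and ae: "AE x in M. f x = g x / c"
  shows "L2n M f * L2n M g \<le> (1 / c) * (L2n M g)^2"
proof (cases "integrable M (\<lambda>x. (g x)^2)")
  case True
  have ig: "integrable M (\<lambda>x. (g x)^2 / c^2)" using True by simp
  have ae2: "AE x in M. (f x)^2 = (g x)^2 / c^2" using ae by eventually_elim (simp add: power_divide)
  have le: "integral\<^sup>L M (\<lambda>x. (f x)^2) \<le> integral\<^sup>L M (\<lambda>x. (g x)^2 / c^2)"
  proof (cases "integrable M (\<lambda>x. (f x)^2)")
    case True
    show ?thesis by (rule integral_mono_AE[OF True ig]) (use ae2 in \<open>eventually_elim, simp\<close>)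
  next
    case False
    then have "integral\<^sup>L M (\<lambda>x. (f x)^2) = 0" by (rule not_integrable_integral_eq)
    moreover have "0 \<le> integral\<^sup>L M (\<lambda>x. (g x)^2 / c^2)" by (rule integral_nonneg_AE) simp
    ultimately show ?thesis by simp
  qed
  have "L2n M f \<le> sqrt (integral\<^sup>L M (\<lambda>x. (g x)^2) / c^2)"
    unfolding L2n_def using le by simp
  also have "\<dots> = L2n M g / c" using c by (simp add: L2n_def real_sqrt_divide)
  finally have "L2n M f \<le> L2n M g / c" .
  then have "L2n M f * L2n M g \<le> L2n M g / c * L2n M g"
    by (rule mult_right_mono) (rule L2_nonneg)
  then show ?thesis by (simp add: power2_eq_square)
next
  case False
  then have "L2n M g = 0" by (simp add: L2n_def not_integrable_integral_eq)
  then show ?thesis by simp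
qed

lemma core:
  fixes tau :: real and als :: "nat \<Rightarrow> 'x \<Rightarrow> real^2" and nus :: "nat \<Rightarrow> 'x \<Rightarrow> real^2"
  assumes tau: "0 < tau" "tau < 1"
    and ae: "AE x in PX. als a x = mk2 (-1) (nus a x $ 2 / (1 - tau))"
  shows "L2n PX (\<lambda>x. nu_of mu q a x $ 1 - nus a x $ 1) * L2n PX (\<lambda>x. e x - es x)
      + (\<Sum>i\<in>UNIV. \<Sum>j\<in>UNIV. G_sq $ i $ j * L2n PX (\<lambda>x. alpha_of tau q a x $ i - als a x $ i)
                                        * L2n PX (\<lambda>x. nu_of mu q a x $ j - nus a x $ j))
      + (\<Sum>i\<in>UNIV. \<Sum>j\<in>UNIV. H_sq $ i $ j * L2n PX (\<lambda>x. nu_of mu q a x $ i - nus a x $ i)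
                                        * L2n PX (\<lambda>x. nu_of mu q a x $ j - nus a x $ j))
    \<le> (1 + 1 / (1 - tau)) * (L2n PX (\<lambda>x. mu a x - nus a x $ 1) * L2n PX (\<lambda>x. e x - es x)
                   + (L2n PX (\<lambda>x. q a x - nus a x $ 2))^2)"
proof -
  define A where "A = L2n PX (\<lambda>x. mu a x - nus a x $ 1) * L2n PX (\<lambda>x. e x - es x)"
  define B where "B = L2n PX (\<lambda>x. q a x - nus a x $ 2)"
  define D where "D = L2n PX (\<lambda>x. alpha_of tau q a x $ 2 - als a x $ 2)"
  have n1: "nu_of mu q a x $ 1 = mu a x" and n2: "nu_of mu q a x $ 2 = q a x" for x
    by (simp_all add: nu_of_def mk2_def)
  have z1: "L2n PX (\<lambda>x. alpha_of tau q a x $ 1 - als a x $ 1) = 0"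
    by (rule L2_zero) (use ae in \<open>eventually_elim, simp add: alpha_of_def mk2_def\<close>)
  have DB: "D * B \<le> (1 / (1 - tau)) * B^2" unfolding D_def B_def
    by (rule L2_bound) (use tau in simp, use ae in \<open>eventually_elim, simp add: alpha_of_def mk2_def diff_divide_distrib\<close>)
  have A0: "A \<ge> 0" unfolding A_def by (intro mult_nonneg_nonneg L2_nonneg)
  have "1 / (1 - tau) > 0" using tau by simp
  then have "0 \<le> 1 / (1 - tau) * A" using A0 by simp
  then have fin: "A + D * B + B * B \<le> (1 + 1 / (1 - tau)) * (A + B^2)"
  proof -
    have e: "(1 + 1 / (1 - tau)) * (A + B^2) = A + B^2 + 1 / (1 - tau) * A + 1 / (1 - tau) * B^2"
      by (simp add: algebra_simps)
    have "B * B = B^2" by (simp add: power2_eq_square)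
    then show ?thesis using DB e \<open>0 \<le> 1 / (1 - tau) * A\<close> by (simp add: mult.commute[of D B]) 
  qed
  show ?thesis
    using fin unfolding A_def[symmetric] B_def[symmetric]
    by (simp add: sum_2 G_sq_def H_sq_def n1 n2 z1 D_def B_def A_def)
qed

theorem corollary2:
  fixes tau :: real
    and PX :: "'x measure"
    and Kc :: "nat \<Rightarrow> 'x \<Rightarrow> real measure"
    and es :: "'x \<Rightarrow> real"
    and nus :: "nat \<Rightarrow> 'x \<Rightarrow> real^2"
    and Xi :: "(('x \<Rightarrow> real) \<times> (nat \<Rightarrow> 'x \<Rightarrow> real^2) \<times> (nat \<Rightarrow> 'x \<Rightarrow> real^2)) set"
    and c1 c2 c3 c4 c5 :: real
    and Kf :: nat
    and ehat :: "nat \<Rightarrow> 'x \<Rightarrow> real"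
    and muhat qhat :: "nat \<Rightarrow> nat \<Rightarrow> 'x \<Rightarrow> real"
  assumes tau: "0 < tau" "tau < 1"
    and PX: "prob_space PX"
    and es_meas: "es \<in> borel_measurable PX"
    and es_range: "\<forall>x \<in> space PX. 0 \<le> es x \<and> es x \<le> 1"
    and Kc_prob: "\<forall>a \<in> {0,1}. \<forall>x \<in> space PX. prob_space (Kc a x) \<and> sets (Kc a x) = sets borel"
    and Kc_cont: "\<forall>a \<in> {0,1}. \<forall>x \<in> space PX. \<forall>y. measure (Kc a x) {y} = 0"
    and nus_solves: "\<forall>a \<in> {0,1}. \<forall>x \<in> space PX. cmom tau Kc a x (nus a x) = 0"
    and bounded: "boundedness tau PX Kc es nus Xi c1 c2 c3 c4 c5 G_sq H_sq"
    and Kf: "Kf \<ge> 2"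
    and in_Xi: "\<forall>k \<in> {1..Kf}. (ehat k, alpha_of tau (qhat k), nu_of (muhat k) (qhat k)) \<in> Xi"
  shows
    "(\<forall>a \<in> {0,1}. AE x in PX. alpha_star tau Kc nus a x = mk2 (-1) (nus a x $ 2 / (1 - tau)))
     \<and> (\<forall>(e :: 'x \<Rightarrow> real) (mu :: nat \<Rightarrow> 'x \<Rightarrow> real) q. \<forall>a \<in> {0,1}. \<forall>x \<in> space PX.
          AE y in Kc a x.
            psi_gen tau (x, a, y) e (alpha_of tau q) (nu_of mu q) = psi_csqte tau (x, a, y) e mu q)
     \<and> (\<exists>C > 0. \<forall>(Kf' :: nat) (e' :: nat \<Rightarrow> 'x \<Rightarrow> real) (mu' :: nat \<Rightarrow> nat \<Rightarrow> 'x \<Rightarrow> real) q'.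
          Kf' \<ge> 2 \<longrightarrow>
          (\<forall>k \<in> {1..Kf'}. (e' k, alpha_of tau (q' k), nu_of (mu' k) (q' k)) \<in> Xi) \<longrightarrow>
          (\<Sum>k = 1..Kf'. err_fun PX es (alpha_star tau Kc nus) nus G_sq H_sq
                             (e' k) (alpha_of tau (q' k)) (nu_of (mu' k) (q' k)))
            \<le> C * (\<Sum>k = 1..Kf'. \<Sum>a \<in> {0,1::nat}.
                     L2n PX (\<lambda>x. mu' k a x - nus a x $ 1) * L2n PX (\<lambda>x. e' k x - es x)
                   + (L2n PX (\<lambda>x. q' k a x - nus a x $ 2))^2))"
proof -
  have c4: "c4 > 0" using bounded by (simp add: boundedness_def)
  have mem: "(ehat 1, alpha_of tau (qhat 1), nu_of (muhat 1) (qhat 1)) \<in> Xi" using in_Xi Kf by auto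
  have P1: "\<forall>a \<in> {0,1}. AE x in PX. alpha_star tau Kc nus a x = mk2 (-1) (nus a x $ 2 / (1 - tau))"
  proof
    fix a :: nat assume a: "a \<in> {0,1}"
    show "AE x in PX. alpha_star tau Kc nus a x = mk2 (-1) (nus a x $ 2 / (1 - tau))"
      using bounded_point[OF bounded mem a] AE_space
    proof eventually_elim
      case (elim x)
      have "prob_space (Kc a x)" "sets (Kc a x) = sets borel" using Kc_prob a elim by auto
      moreover have "\<forall>y. measure (Kc a x) {y} = 0" using Kc_cont a elim by auto
      ultimately show ?case unfolding alpha_star_def
        using alpha_point[where Kc=Kc and a=a and x=x and n="nus a x" and tau=tau]
          tau c4 elim by blast
    qed
  qed
  have P2: "\<forall>(e :: 'x \<Rightarrow> real) (mu :: nat \<Rightarrow> 'x \<Rightarrow> real) q. \<forall>a \<in> {0,1}. \<forall>x \<in> space PX.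
          AE y in Kc a x.
            psi_gen tau (x, a, y) e (alpha_of tau q) (nu_of mu q) = psi_csqte tau (x, a, y) e mu q"
  proof (intro allI ballI)
    fix e :: "'x \<Rightarrow> real" and mu q :: "nat \<Rightarrow> 'x \<Rightarrow> real" and a :: nat and x :: 'x
    assume a: "a \<in> {0,1}" and x: "x \<in> space PX"
    have S: "sets (Kc a x) = sets borel" using Kc_prob a x by auto
    have "{q a x} \<in> sets (Kc a x)" using S by simp
    moreover have "emeasure (Kc a x) {q a x} = 0"
    proof -
      interpret P: prob_space "Kc a x" using Kc_prob a x by auto
      have "measure (Kc a x) {q a x} = 0" using Kc_cont a x by blast
      then show ?thesis by (simp add: P.emeasure_eq_measure)
    qed
    ultimately have ae: "AE y in Kc a x. y \<noteq> q a x"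
      by (intro AE_I[where N="{q a x}"]) auto
    show "AE y in Kc a x.
            psi_gen tau (x, a, y) e (alpha_of tau q) (nu_of mu q) = psi_csqte tau (x, a, y) e mu q"
      using ae
    proof eventually_elim
      case (elim y)
      define Q where "Q = q a x"
      define w where "w = (real a - e x) / (e x * (1 - e x))"
      have ne: "1 - tau \<noteq> 0" using tau by simp
      have "alpha_of tau q a x \<bullet> rho_sq tau y (nu_of mu q a x)
          = - (y * (if y \<ge> Q then 1 else 0) / (1 - tau) - mu a x)
            + Q / (1 - tau) * (tau - (if y \<le> Q then 1 else 0))"
        by (simp add: alpha_of_def nu_of_def rho_sq_def mk2_def inner_vec_def sum_2 Q_def)
      also have "\<dots> = - (Q + (y - Q) * (if y \<ge> Q then 1 else 0) / (1 - tau) - mu a x)"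
      proof (cases "y \<le> Q")
        case True
        then have "\<not> y \<ge> Q" using elim unfolding Q_def[symmetric] by auto
        moreover have "Q / (1 - tau) * (tau - 1) = - Q" using ne
          by (simp add: divide_simps) (simp add: algebra_simps)
        ultimately show ?thesis using True by simp
      next
        case False
        then have "y \<ge> Q" by simp
        moreover have "- (y / (1 - tau) - mu a x) + Q / (1 - tau) * tau
            = - (Q + (y - Q) / (1 - tau) - mu a x)" using ne
          by (simp add: divide_simps) (simp add: algebra_simps)
        ultimately show ?thesis using False by simp
      qed
      finally have eq: "alpha_of tau q a x \<bullet> rho_sq tau y (nu_of mu q a x)
          = - (Q + (y - Q) * (if y \<ge> Q then 1 else 0) / (1 - tau) - mu a x)" .
      show ?case
      proof -
        have n1: "nu_of mu q b x $ 1 = mu b x" for b by (simp add: nu_of_def mk2_def)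
        show ?thesis unfolding psi_gen_def psi_csqte_def prod.case eq[unfolded Q_def] n1
          by (simp only: mult_minus_right diff_minus_eq_add)
      qed
    qed
  qed
  have P3: "\<exists>C > 0. \<forall>(Kf' :: nat) (e' :: nat \<Rightarrow> 'x \<Rightarrow> real) (mu' :: nat \<Rightarrow> nat \<Rightarrow> 'x \<Rightarrow> real) q'.
          Kf' \<ge> 2 \<longrightarrow>
          (\<forall>k \<in> {1..Kf'}. (e' k, alpha_of tau (q' k), nu_of (mu' k) (q' k)) \<in> Xi) \<longrightarrow>
          (\<Sum>k = 1..Kf'. err_fun PX es (alpha_star tau Kc nus) nus G_sq H_sq
                             (e' k) (alpha_of tau (q' k)) (nu_of (mu' k) (q' k)))
            \<le> C * (\<Sum>k = 1..Kf'. \<Sum>a \<in> {0,1::nat}.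
                     L2n PX (\<lambda>x. mu' k a x - nus a x $ 1) * L2n PX (\<lambda>x. e' k x - es x)
                   + (L2n PX (\<lambda>x. q' k a x - nus a x $ 2))^2)"
  proof (intro exI[of _ "1 + 1 / (1 - tau)"] conjI allI impI)
    show "0 < 1 + 1 / (1 - tau)" using tau by (simp add: add_pos_pos)
    fix Kf' :: nat and e' :: "nat \<Rightarrow> 'x \<Rightarrow> real" and mu' q' :: "nat \<Rightarrow> nat \<Rightarrow> 'x \<Rightarrow> real"
    have "err_fun PX es (alpha_star tau Kc nus) nus G_sq H_sq (e' k) (alpha_of tau (q' k)) (nu_of (mu' k) (q' k))
        \<le> (1 + 1 / (1 - tau)) * (\<Sum>a \<in> {0,1::nat}.
                     L2n PX (\<lambda>x. mu' k a x - nus a x $ 1) * L2n PX (\<lambda>x. e' k x - es x)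
                   + (L2n PX (\<lambda>x. q' k a x - nus a x $ 2))^2)" for k
      unfolding err_fun_def sum_distrib_left
    proof (rule sum_mono)
      fix a :: nat assume a: "a \<in> {0,1}"
      show "L2n PX (\<lambda>x. nu_of (mu' k) (q' k) a x $ 1 - nus a x $ 1) * L2n PX (\<lambda>x. e' k x - es x)
      + (\<Sum>i\<in>UNIV. \<Sum>j\<in>UNIV. G_sq $ i $ j * L2n PX (\<lambda>x. alpha_of tau (q' k) a x $ i - alpha_star tau Kc nus a x $ i)
                                        * L2n PX (\<lambda>x. nu_of (mu' k) (q' k) a x $ j - nus a x $ j))
      + (\<Sum>i\<in>UNIV. \<Sum>j\<in>UNIV. H_sq $ i $ j * L2n PX (\<lambda>x. nu_of (mu' k) (q' k) a x $ i - nus a x $ i)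
                                        * L2n PX (\<lambda>x. nu_of (mu' k) (q' k) a x $ j - nus a x $ j))
        \<le> (1 + 1 / (1 - tau)) * (L2n PX (\<lambda>x. mu' k a x - nus a x $ 1) * L2n PX (\<lambda>x. e' k x - es x)
                   + (L2n PX (\<lambda>x. q' k a x - nus a x $ 2))^2)"
        by (rule core[OF tau]) (use P1 a in blast)
    qed
    then show "(\<Sum>k = 1..Kf'. err_fun PX es (alpha_star tau Kc nus) nus G_sq H_sq
                             (e' k) (alpha_of tau (q' k)) (nu_of (mu' k) (q' k)))
            \<le> (1 + 1 / (1 - tau)) * (\<Sum>k = 1..Kf'. \<Sum>a \<in> {0,1::nat}.
                     L2n PX (\<lambda>x. mu' k a x - nus a x $ 1) * L2n PX (\<lambda>x. e' k x - es x)
                   + (L2n PX (\<lambda>x. q' k a x - nus a x $ 2))^2)"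
      unfolding sum_distrib_left by (intro sum_mono)
  qed
  show ?thesis using P1 P2 P3 by blast
qed

end
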